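(* For every $p\in(1,\infty)$ there are constants $0<c_1\le c_2<\infty$ depending only on $p$ such that for every integer $h\ge2$, $$c_1\log(h)^{1/p}\le c_{\ell_p}(T^\omega_h)\le c_2\log(h)^{1/p}.$$
   Context: For a positive integer $h$, $T^\omega_h$ is the complete countably branching rooted tree of height $h$: every vertex at distance $<h$ from the root has countably infinitely many children, and vertices at distance $h$ from the root are leaves; it carries the unweighted shortest-path metric. $c_Y(M):=\inf\{\mathrm{Lip}(f)\mathrm{Lip}(f^{-1}): f\colon M\to Y\text{ injective}\}$. *)

theory Defs
  imports "HOL-Analysis.Analysis"
begin

definition Lip :: "'a set \<Rightarrow> ('a \<Rightarrow> 'a \<Rightarrow> real) \<Rightarrow> ('b \<Rightarrow> 'b \<Rightarrow> real) \<Rightarrow> ('a \<Rightarrow> 'b) \<Rightarrow> ereal" where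
  "Lip A dA dB f = (SUP uv \<in> {(u,v). u \<in> A \<and> v \<in> A \<and> u \<noteq> v}.
      ereal (dB (f (fst uv)) (f (snd uv)) / dA (fst uv) (snd uv)))"

definition Lip_inv :: "'a set \<Rightarrow> ('a \<Rightarrow> 'a \<Rightarrow> real) \<Rightarrow> ('b \<Rightarrow> 'b \<Rightarrow> real) \<Rightarrow> ('a \<Rightarrow> 'b) \<Rightarrow> ereal" where
  "Lip_inv A dA dB f = (SUP uv \<in> {(u,v). u \<in> A \<and> v \<in> A \<and> u \<noteq> v}.
      ereal (dA (fst uv) (snd uv) / dB (f (fst uv)) (f (snd uv))))"

definition distortion :: "'a set \<Rightarrow> ('a \<Rightarrow> 'a \<Rightarrow> real) \<Rightarrow> 'b set \<Rightarrow> ('b \<Rightarrow> 'b \<Rightarrow> real) \<Rightarrow> ereal" where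
  "distortion M dM Y dY = (INF f \<in> {f. inj_on f M \<and> f ` M \<subseteq> Y}. Lip M dM dY f * Lip_inv M dM dY f)"

definition lp_space :: "real \<Rightarrow> (nat \<Rightarrow> real) set" where
  "lp_space p = {x. summable (\<lambda>i. \<bar>x i\<bar> powr p)}"

definition lp_dist :: "real \<Rightarrow> (nat \<Rightarrow> real) \<Rightarrow> (nat \<Rightarrow> real) \<Rightarrow> real" where
  "lp_dist p x y = (\<Sum>i. \<bar>x i - y i\<bar> powr p) powr (1 / p)"

text \<open>Complete countably branching tree of height h: vertices are lists of naturals
  of length at most h (root = [], children of xs are xs @ [n]); shortest-path metric
  is |xs| + |ys| - 2 |longest common prefix|.\<close>
definition tree_vertices :: "nat \<Rightarrow> nat list set" where
  "tree_vertices h = {xs. length xs \<le> h}"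

fun lcp :: "nat list \<Rightarrow> nat list \<Rightarrow> nat" where
  "lcp (x # xs) (y # ys) = (if x = y then Suc (lcp xs ys) else 0)"
| "lcp _ _ = 0"

definition tree_dist :: "nat list \<Rightarrow> nat list \<Rightarrow> real" where
  "tree_dist xs ys = real (length xs + length ys - 2 * lcp xs ys)"

end

theory Submission
  imports Defs "HOL-Library.Diagonal_Subsequence" "HOL-Library.Nat_Bijection"
begin


lemma powr_convex0:
  fixes p u v t :: real
  assumes "1 \<le> p" "0 \<le> u" "0 \<le> v" "0 \<le> t" "t \<le> 1"
  shows "(t * u + (1 - t) * v) powr p \<le> t * u powr p + (1 - t) * v powr p"
proof -
  consider "u = 0" | "v = 0" | "u > 0" "v > 0" using assms by linarith
  then show ?thesis
  proof cases
    case 1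
    have "((1 - t) * v) powr p = (1-t) powr p * v powr p"
      using assms by (simp add: powr_mult)
    also have "\<dots> \<le> (1-t) * v powr p"
    proof (rule mult_right_mono)
      show "(1-t) powr p \<le> 1 - t"
        using assms using powr_le_one_le[of "1-t" p] assms by (cases "t = 1") auto
    qed simp
    finally show ?thesis using 1 assms by simp
  next
    case 2
    have "(t * u) powr p = t powr p * u powr p"
      using assms by (simp add: powr_mult)
    also have "\<dots> \<le> t * u powr p"
    proof (rule mult_right_mono)
      show "t powr p \<le> t"
        using assms using powr_le_one_le[of t p] assms by (cases "t = 0") auto
    qed simp
    finally show ?thesis using 2 assms by simp
  next
    case 3
    show ?thesis
      using convex_onD[OF powr_convex[OF assms(1)], of t v u] 3 assms by (auto simp: ac_simps)
  qed
qed

lemma split_ineq: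
  fixes p a b l :: real
  assumes "1 \<le> p" "0 < l" "l < 1" "0 \<le> a" "0 \<le> b"
  shows "(a + b) powr p \<le> l powr (1 - p) * a powr p + (1 - l) powr (1 - p) * b powr p"
proof -
  have e: "a + b = l * (a / l) + (1 - l) * (b / (1 - l))" using assms by simp
  have "(a + b) powr p \<le> l * (a / l) powr p + (1 - l) * (b / (1 - l)) powr p"
    unfolding e by (rule powr_convex0) (use assms in auto)
  also have "l * (a / l) powr p = l powr (1 - p) * a powr p"
    using assms by (simp add: powr_divide powr_diff)
  also have "(1 - l) * (b / (1 - l)) powr p = (1 - l) powr (1 - p) * b powr p"
    using assms by (simp add: powr_divide powr_diff)
  finally show ?thesis .
qed

lemma split_ineq_abs:
  fixes p u w l :: real
  assumes "1 \<le> p" "0 < l" "l < 1"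
  shows "\<bar>u + w\<bar> powr p \<le> l powr (1 - p) * \<bar>u\<bar> powr p + (1 - l) powr (1 - p) * \<bar>w\<bar> powr p"
proof -
  have "\<bar>u + w\<bar> powr p \<le> (\<bar>u\<bar> + \<bar>w\<bar>) powr p"
    using assms by (intro powr_mono2) auto
  also have "\<dots> \<le> l powr (1 - p) * \<bar>u\<bar> powr p + (1 - l) powr (1 - p) * \<bar>w\<bar> powr p" by (rule split_ineq) (use assms in auto)
  finally show ?thesis .
qed

definition psum :: "real \<Rightarrow> (nat \<Rightarrow> real) \<Rightarrow> real" where
  "psum p x = (\<Sum>i. \<bar>x i\<bar> powr p)"

lemma psum_nonneg: "x \<in> lp_space p \<Longrightarrow> 0 \<le> psum p x"
  unfolding psum_def lp_space_def by (auto intro: suminf_nonneg)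

lemma psum_zero_iff:
  assumes "x \<in> lp_space p"
  shows "psum p x = 0 \<longleftrightarrow> x = (\<lambda>i. 0)"
proof -
  have "psum p x = 0 \<longleftrightarrow> (\<forall>i. \<bar>x i\<bar> powr p = 0)"
    unfolding psum_def using assms unfolding lp_space_def
    by (subst suminf_eq_zero_iff) auto
  then show ?thesis by (auto simp: fun_eq_iff)
qed

lemma minkowski:
  fixes p :: real
  assumes p: "1 \<le> p" and x: "x \<in> lp_space p" and y: "y \<in> lp_space p"
  shows "(\<lambda>i. x i + y i) \<in> lp_space p"
    and "psum p (\<lambda>i. x i + y i) powr (1/p) \<le> psum p x powr (1/p) + psum p y powr (1/p)"
proof -
  define a where "a = psum p x powr (1/p)"
  define b where "b = psum p y powr (1/p)"
  have a0: "a \<ge> 0" "b \<ge> 0" unfolding a_def b_def by auto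
  have pa: "psum p x = a powr p" unfolding a_def using p psum_nonneg[OF x]
    by (simp add: powr_powr)
  have pb: "psum p y = b powr p" unfolding b_def using p psum_nonneg[OF y]
    by (simp add: powr_powr)
  have "(\<lambda>i. x i + y i) \<in> lp_space p \<and> psum p (\<lambda>i. x i + y i) powr (1/p) \<le> a + b"
  proof (cases "a = 0 \<or> b = 0")
    case True
    then show ?thesis
    proof
      assume "a = 0"
      then have "psum p x = 0" using pa p by simp
      then have "x = (\<lambda>i. 0)" using psum_zero_iff x by blast
      then show ?thesis using y b_def a0 `a = 0` by simp
    next
      assume "b = 0"
      then have "psum p y = 0" using pb p by simp
      then have "y = (\<lambda>i. 0)" using psum_zero_iff y by blast
      then show ?thesis using x a_def a0 `b = 0` by simp
    qed
  next
    case False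
    then have apos: "a > 0" "b > 0" using a0 by auto
    define l where "l = a / (a + b)"
    have l: "0 < l" "l < 1" "1 - l = b / (a + b)" using apos by (auto simp: l_def field_simps)
    define g where "g i = l powr (1 - p) * \<bar>x i\<bar> powr p + (1 - l) powr (1 - p) * \<bar>y i\<bar> powr p" for i
    have sx: "summable (\<lambda>i. \<bar>x i\<bar> powr p)" using x by (simp add: lp_space_def)
    have sy: "summable (\<lambda>i. \<bar>y i\<bar> powr p)" using y by (simp add: lp_space_def)
    have sg: "summable g" unfolding g_def using sx sy by (intro summable_add summable_mult)
    have le: "\<bar>x i + y i\<bar> powr p \<le> g i" for i
      unfolding g_def using split_ineq_abs[OF p l(1,2)] by blast
    have s: "summable (\<lambda>i. \<bar>x i + y i\<bar> powr p)"
      by (rule summable_comparison_test'[OF sg]) (use le in auto)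
    have "psum p (\<lambda>i. x i + y i) \<le> suminf g"
      unfolding psum_def by (rule suminf_le[OF le s sg])
    also have "suminf g = l powr (1 - p) * psum p x + (1 - l) powr (1 - p) * psum p y"
      unfolding g_def psum_def using sx sy
      by (subst suminf_add[symmetric]) (auto intro: summable_mult simp: suminf_mult)
    also have "\<dots> = (a + b) powr p"
    proof -
      have key: "(c / (a+b)) powr (1 - p) * c powr p = c * (a+b) powr (p - 1)" if "c > 0" for c
      proof -
        have "(c / (a+b)) powr (1 - p) * c powr p = (c powr (1 - p) * c powr p) / (a+b) powr (1 - p)"
          using apos that by (simp add: powr_divide)
        also have "c powr (1 - p) * c powr p = c" using that by (simp add: powr_add[symmetric])
        also have "c / (a+b) powr (1 - p) = c * (a+b) powr (p - 1)"
          using apos by (simp add: powr_minus_divide[symmetric] divide_inverse powr_minus[symmetric])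
        finally show ?thesis .
      qed
      have "l powr (1 - p) * a powr p = a * (a+b) powr (p - 1)"
        unfolding l_def by (rule key) (use apos in auto)
      moreover have "(1 - l) powr (1 - p) * b powr p = b * (a+b) powr (p - 1)"
        unfolding l(3) by (rule key) (use apos in auto)
      moreover have "a * (a+b) powr (p - 1) + b * (a+b) powr (p - 1) = (a + b) powr p"
        proof -
        have "a * (a+b) powr (p - 1) + b * (a+b) powr (p - 1) = (a+b) powr 1 * (a+b) powr (p - 1)"
          using apos by (simp add: distrib_right)
        also have "\<dots> = (a + b) powr p" by (subst powr_add[symmetric]) simp
        finally show ?thesis .
      qed
      ultimately show ?thesis using pa pb by simp
    qed
    finally have "psum p (\<lambda>i. x i + y i) \<le> (a + b) powr p" .
    then have "psum p (\<lambda>i. x i + y i) powr (1/p) \<le> ((a + b) powr p) powr (1/p)"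
      using p by (intro powr_mono2) (auto simp: psum_nonneg s lp_space_def)
    also have "\<dots> = a + b" using p apos by (simp add: powr_powr)
    finally show ?thesis using s by (simp add: lp_space_def)
  qed
  then show "(\<lambda>i. x i + y i) \<in> lp_space p"
    and "psum p (\<lambda>i. x i + y i) powr (1/p) \<le> psum p x powr (1/p) + psum p y powr (1/p)"
    by (auto simp: a_def b_def)
qed

lemma pt_ineq:
  fixes p d :: real
  assumes p: "1 < p" and d: "0 < d"
  shows "\<exists>C\<ge>0. \<forall>u w. \<bar>\<bar>u + w\<bar> powr p - \<bar>w\<bar> powr p\<bar> \<le> d * \<bar>w\<bar> powr p + C * \<bar>u\<bar> powr p"
proof -
  define l where "l = (1 + d) powr (1 / (1 - p))"
  have l0: "0 < l" unfolding l_def using d by simp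
  have l1: "l < 1" unfolding l_def using d p
    by (intro powr_less_one) (auto simp: divide_neg_pos)
  have ll: "l powr (1 - p) = 1 + d" unfolding l_def using d p by (simp add: powr_powr)
  define C where "C = (1 - l) powr (1 - p)"
  have C0: "C \<ge> 0" unfolding C_def by simp
  show ?thesis
  proof (intro exI[of _ C] conjI allI C0)
    fix u w :: real
    have up: "\<bar>w + u\<bar> powr p \<le> (1 + d) * \<bar>w\<bar> powr p + C * \<bar>u\<bar> powr p"
      using split_ineq_abs[of p l w u] p l0 l1 ll by (simp add: C_def)
    have lo: "\<bar>(u + w) + (- u)\<bar> powr p \<le> (1 + d) * \<bar>u + w\<bar> powr p + C * \<bar>- u\<bar> powr p"
      using split_ineq_abs[of p l "u + w" "- u"] p l0 l1 ll by (simp add: C_def)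
    then have lo': "\<bar>w\<bar> powr p \<le> (1 + d) * \<bar>u + w\<bar> powr p + C * \<bar>u\<bar> powr p" by simp
    have A: "\<bar>u + w\<bar> powr p - \<bar>w\<bar> powr p \<le> d * \<bar>w\<bar> powr p + C * \<bar>u\<bar> powr p"
      using up by (simp add: add.commute algebra_simps)
    have "(1 + d) * (\<bar>w\<bar> powr p - d * \<bar>w\<bar> powr p - C * \<bar>u\<bar> powr p) \<le> \<bar>w\<bar> powr p - C * \<bar>u\<bar> powr p"
    proof -
      have "(1 + d) * (\<bar>w\<bar> powr p - d * \<bar>w\<bar> powr p - C * \<bar>u\<bar> powr p)
          = \<bar>w\<bar> powr p - d * d * \<bar>w\<bar> powr p - (1 + d) * C * \<bar>u\<bar> powr p"
        by (simp add: algebra_simps)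
      also have "\<dots> \<le> \<bar>w\<bar> powr p - C * \<bar>u\<bar> powr p"
        using d C0 by (simp add: algebra_simps mult_nonneg_nonneg)
      finally show ?thesis .
    qed
    also have "\<dots> \<le> (1 + d) * \<bar>u + w\<bar> powr p" using lo' by simp
    finally have "\<bar>w\<bar> powr p - d * \<bar>w\<bar> powr p - C * \<bar>u\<bar> powr p \<le> \<bar>u + w\<bar> powr p"
      using d by simp
    then have B: "\<bar>w\<bar> powr p - \<bar>u + w\<bar> powr p \<le> d * \<bar>w\<bar> powr p + C * \<bar>u\<bar> powr p" by simp
    show "\<bar>\<bar>u + w\<bar> powr p - \<bar>w\<bar> powr p\<bar> \<le> d * \<bar>w\<bar> powr p + C * \<bar>u\<bar> powr p"
      using A B by linarith
  qed
qed

lemma lp_sums: "x \<in> lp_space p \<Longrightarrow> (\<lambda>i. \<bar>x i\<bar> powr p) sums psum p x"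
  unfolding lp_space_def psum_def by (simp add: summable_sums)

lemma lp_uminus: "x \<in> lp_space p \<Longrightarrow> (\<lambda>i. - x i) \<in> lp_space p"
  unfolding lp_space_def by simp

lemma psum_uminus: "psum p (\<lambda>i. - x i) = psum p x"
  unfolding psum_def by simp

lemma asym:
  assumes p: "1 < p" and v: "v \<in> lp_space p" and e: "\<And>n. e n \<in> lp_space p"
    and B: "\<And>n. psum p (e n) \<le> B" and pw: "\<And>i. (\<lambda>n. e n i) \<longlonglongrightarrow> 0"
  shows "(\<lambda>n. psum p (\<lambda>i. v i + e n i) - psum p v - psum p (e n)) \<longlonglongrightarrow> 0"
proof (rule LIMSEQ_I)
  fix r :: real assume r: "0 < r"
  have B0: "0 \<le> B" using B[of 0] psum_nonneg[OF e[of 0]] by linarith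
  define d where "d = r / (4 * (B + 1))"
  have d0: "0 < d" unfolding d_def using r B0 by simp
  obtain C where C0: "C \<ge> 0" and C: "\<And>u w. \<bar>\<bar>u + w\<bar> powr p - \<bar>w\<bar> powr p\<bar> \<le> d * \<bar>w\<bar> powr p + C * \<bar>u\<bar> powr p"
    using pt_ineq[OF p d0] by blast
  have "(\<lambda>n. \<Sum>i<n. \<bar>v i\<bar> powr p) \<longlonglongrightarrow> psum p v"
    using v unfolding lp_space_def psum_def by (intro summable_LIMSEQ) simp
  then obtain N where N: "\<And>n. n \<ge> N \<Longrightarrow> norm ((\<Sum>i<n. \<bar>v i\<bar> powr p) - psum p v) < r / (4 * (C + 1))"
    using LIMSEQ_D[of _ "psum p v" "r / (4 * (C + 1))"] r C0 by force
  have tailv: "psum p v - (\<Sum>i<N. \<bar>v i\<bar> powr p) < r / (4 * (C + 1))"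
    using N[of N] by simp
  define \<phi> where "\<phi> n i = \<bar>v i + e n i\<bar> powr p - \<bar>v i\<bar> powr p - \<bar>e n i\<bar> powr p" for n i
  have hd: "(\<lambda>n. \<Sum>i<N. \<bar>\<phi> n i\<bar>) \<longlonglongrightarrow> (\<Sum>i<N. \<bar>\<bar>v i + 0\<bar> powr p - \<bar>v i\<bar> powr p - \<bar>0::real\<bar> powr p\<bar>)"
    unfolding \<phi>_def using p
    by (intro tendsto_sum tendsto_rabs tendsto_diff tendsto_powr2 tendsto_add pw tendsto_const) auto
  then have hd: "(\<lambda>n. \<Sum>i<N. \<bar>\<phi> n i\<bar>) \<longlonglongrightarrow> 0" using p by simp
  then obtain M where M: "\<And>n. n \<ge> M \<Longrightarrow> norm ((\<Sum>i<N. \<bar>\<phi> n i\<bar>) - 0) < r / 4"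
    using LIMSEQ_D[of _ 0 "r/4"] r by force
  show "\<exists>no. \<forall>n\<ge>no. norm (psum p (\<lambda>i. v i + e n i) - psum p v - psum p (e n) - 0) < r"
  proof (intro exI allI impI)
    fix n assume n: "n \<ge> M"
    have ve: "(\<lambda>i. v i + e n i) \<in> lp_space p" using minkowski(1)[of p v "e n"] p v e by auto
    have s\<phi>: "\<phi> n sums (psum p (\<lambda>i. v i + e n i) - psum p v - psum p (e n))"
      unfolding \<phi>_def by (intro sums_diff lp_sums ve v e)
    define \<psi> where "\<psi> i = (if i \<in> {..<N} then \<bar>\<phi> n i\<bar> else 0) + d * \<bar>e n i\<bar> powr p
        + (C + 1) * (\<bar>v i\<bar> powr p - (if i \<in> {..<N} then \<bar>v i\<bar> powr p else 0))" for i
    have s\<psi>: "\<psi> sums ((\<Sum>i<N. \<bar>\<phi> n i\<bar>) + d * psum p (e n) + (C + 1) * (psum p v - (\<Sum>i<N. \<bar>v i\<bar> powr p)))"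
      unfolding \<psi>_def
      by (intro sums_add sums_mult sums_diff sums_If_finite_set lp_sums v e) auto
    have le: "\<bar>\<phi> n i\<bar> \<le> \<psi> i" for i
    proof (cases "i < N")
      case True
      then show ?thesis unfolding \<psi>_def using d0 C0 by (simp add: mult_nonneg_nonneg)
    next
      case False
      have "\<bar>\<phi> n i\<bar> \<le> \<bar>\<bar>v i + e n i\<bar> powr p - \<bar>e n i\<bar> powr p\<bar> + \<bar>v i\<bar> powr p"
        unfolding \<phi>_def using powr_ge_zero[of "\<bar>v i\<bar>" p] by arith
      also have "\<dots> \<le> d * \<bar>e n i\<bar> powr p + C * \<bar>v i\<bar> powr p + \<bar>v i\<bar> powr p"
        using C[of "v i" "e n i"] by simp
      also have "\<dots> = \<psi> i" unfolding \<psi>_def using False by (simp add: algebra_simps)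
      finally show ?thesis .
    qed
    have le1: "psum p (\<lambda>i. v i + e n i) - psum p v - psum p (e n) \<le> ((\<Sum>i<N. \<bar>\<phi> n i\<bar>) + d * psum p (e n) + (C + 1) * (psum p v - (\<Sum>i<N. \<bar>v i\<bar> powr p)))"
      by (rule sums_le[OF _ s\<phi> s\<psi>]) (rule order_trans[OF abs_ge_self le])
    have le2: "- (psum p (\<lambda>i. v i + e n i) - psum p v - psum p (e n)) \<le> ((\<Sum>i<N. \<bar>\<phi> n i\<bar>) + d * psum p (e n) + (C + 1) * (psum p v - (\<Sum>i<N. \<bar>v i\<bar> powr p)))"
      by (rule sums_le[OF _ sums_minus[OF s\<phi>] s\<psi>]) (rule order_trans[OF abs_ge_minus_self le])
    have t1: "(\<Sum>i<N. \<bar>\<phi> n i\<bar>) < r / 4" using M[OF n] by simp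
    have t2: "d * psum p (e n) < r / 4"
    proof -
      have "d * psum p (e n) \<le> d * B" using B[of n] d0 by simp
      also have "\<dots> < r / 4" unfolding d_def using r B0 by (simp add: field_simps)
      finally show ?thesis .
    qed
    have t3: "(C + 1) * (psum p v - (\<Sum>i<N. \<bar>v i\<bar> powr p)) \<le> r / 4"
    proof -
      have "(C + 1) * (psum p v - (\<Sum>i<N. \<bar>v i\<bar> powr p)) \<le> (C + 1) * (r / (4 * (C + 1)))"
        using tailv C0 by (intro mult_left_mono) auto
      also have "\<dots> = r / 4" using C0 by (simp add: field_simps)
      finally show ?thesis .
    qed
    show "norm (psum p (\<lambda>i. v i + e n i) - psum p v - psum p (e n) - 0) < r"
      using le1 le2 t1 t2 t3 by simp
  qed
qed

lemma bdd_subseq: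
  fixes X :: "nat \<Rightarrow> real"
  assumes "\<And>n. \<bar>X n\<bar> \<le> K"
  shows "\<exists>f. strict_mono f \<and> convergent (X \<circ> f)"
proof -
  obtain f where f: "strict_mono f" "monoseq (\<lambda>n. X (f n))" using seq_monosub by blast
  have "Bseq (X \<circ> f)" using assms by (intro BseqI'[of _ K]) auto
  then have "convergent (X \<circ> f)" using f(2) Bseq_monoseq_convergent by (simp add: o_def)
  then show ?thesis using f by blast
qed

lemma lp_coord_le:
  assumes p: "0 < p" and x: "x \<in> lp_space p"
  shows "\<bar>x i\<bar> \<le> psum p x powr (1/p)"
proof -
  have "\<bar>x i\<bar> powr p \<le> psum p x"
    using sum_le_suminf[of "\<lambda>i. \<bar>x i\<bar> powr p" "{i}"] x unfolding lp_space_def psum_def by auto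
  then have "(\<bar>x i\<bar> powr p) powr (1/p) \<le> psum p x powr (1/p)"
    using p by (intro powr_mono2) auto
  then show ?thesis using p by (simp add: powr_powr)
qed

lemma extract_sub:
  fixes z :: "nat \<Rightarrow> nat \<Rightarrow> real"
  assumes p: "1 < p" and z: "\<And>n. z n \<in> lp_space p" and B: "\<And>n. psum p (z n) \<le> B"
  shows "\<exists>r w. strict_mono r \<and> w \<in> lp_space p \<and> (\<forall>i. (\<lambda>n. z (r n) i) \<longlonglongrightarrow> w i)"
proof -
  define K where "K = B powr (1/p)"
  have bd: "\<bar>z n i\<bar> \<le> K" for n i
  proof -
    have "\<bar>z n i\<bar> \<le> psum p (z n) powr (1/p)" using lp_coord_le[OF _ z] p by simp
    also have "\<dots> \<le> K" unfolding K_def using B[of n] psum_nonneg[OF z[of n]] p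
      by (intro powr_mono2) auto
    finally show ?thesis .
  qed
  interpret S: subseqs "\<lambda>i s. convergent (\<lambda>k. z (s k) i)"
  proof
    fix i and s :: "nat \<Rightarrow> nat" assume "strict_mono s"
    obtain f where "strict_mono f" "convergent ((\<lambda>k. z (s k) i) \<circ> f)"
      using bdd_subseq[of "\<lambda>k. z (s k) i" K] bd by blast
    then show "\<exists>r'. strict_mono r' \<and> convergent (\<lambda>k. z ((s \<circ> r') k) i)"
      by (auto simp: o_def)
  qed
  have conv: "convergent (\<lambda>k. z (S.diagseq k) i)" for i
  proof -
    have "convergent (\<lambda>k. z ((S.diagseq \<circ> (+) (Suc i)) k) i)"
      by (rule S.diagseq_holds) (auto simp: o_def dest: convergent_subseq_convergent[unfolded o_def])
    then have "convergent (\<lambda>k. z (S.diagseq (k + Suc i)) i)" by (simp add: o_def add.commute)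
    then obtain L where L: "(\<lambda>k. z (S.diagseq (k + Suc i)) i) \<longlonglongrightarrow> L" by (auto simp: convergent_def)
    have "(\<lambda>k. z (S.diagseq k) i) \<longlonglongrightarrow> L" by (rule LIMSEQ_offset[OF L])
    then show ?thesis by (auto simp: convergent_def)
  qed
  define w where "w i = lim (\<lambda>k. z (S.diagseq k) i)" for i
  have lim: "(\<lambda>k. z (S.diagseq k) i) \<longlonglongrightarrow> w i" for i
    unfolding w_def using conv convergent_LIMSEQ_iff by blast
  have part: "(\<Sum>i<m. \<bar>w i\<bar> powr p) \<le> B" for m
  proof -
    have "(\<lambda>k. \<Sum>i<m. \<bar>z (S.diagseq k) i\<bar> powr p) \<longlonglongrightarrow> (\<Sum>i<m. \<bar>w i\<bar> powr p)"
      using p by (intro tendsto_sum tendsto_powr2 tendsto_rabs lim tendsto_const) auto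
    moreover have "(\<Sum>i<m. \<bar>z (S.diagseq k) i\<bar> powr p) \<le> B" for k
    proof -
      have "(\<Sum>i<m. \<bar>z (S.diagseq k) i\<bar> powr p) \<le> psum p (z (S.diagseq k))"
        unfolding psum_def using z[of "S.diagseq k"]
        by (intro sum_le_suminf) (auto simp: lp_space_def)
      then show ?thesis using B[of "S.diagseq k"] by linarith
    qed
    ultimately show ?thesis by (intro LIMSEQ_le_const2) auto
  qed
  have "w \<in> lp_space p" unfolding lp_space_def
    using summableI_nonneg_bounded[of "\<lambda>i. \<bar>w i\<bar> powr p" B] part by auto
  then show ?thesis using lim S.subseq_diagseq by blast
qed

lemma lp_diff:
  assumes p: "1 \<le> p" and x: "x \<in> lp_space p" and y: "y \<in> lp_space p"
  shows "(\<lambda>i. x i - y i) \<in> lp_space p"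
  using minkowski(1)[OF p x lp_uminus[OF y]] by simp

lemma lp_dist_psum: "lp_dist p x y = psum p (\<lambda>i. x i - y i) powr (1/p)"
  unfolding lp_dist_def psum_def by simp

lemma lp_dist_nonneg: "0 \<le> lp_dist p x y"
  unfolding lp_dist_def by simp

lemma lp_dist_sym: "lp_dist p x y = lp_dist p y x"
  unfolding lp_dist_def by (simp add: abs_minus_commute)

lemma lp_dist_pow:
  assumes p: "1 \<le> p" and x: "x \<in> lp_space p" and y: "y \<in> lp_space p"
  shows "lp_dist p x y powr p = psum p (\<lambda>i. x i - y i)"
  unfolding lp_dist_psum using p psum_nonneg[OF lp_diff[OF p x y]] by (simp add: powr_powr)

lemma lp_dist_tri:
  assumes p: "1 \<le> p" and x: "x \<in> lp_space p" and y: "y \<in> lp_space p" and z: "z \<in> lp_space p"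
  shows "lp_dist p x z \<le> lp_dist p x y + lp_dist p y z"
  using minkowski(2)[OF p lp_diff[OF p x y] lp_diff[OF p y z]] unfolding lp_dist_psum by simp

lemma pow_sum_le:
  fixes p a b :: real
  assumes p: "1 \<le> p" and a: "0 \<le> a" and b: "0 \<le> b"
  shows "(a + b) powr p \<le> 2 powr (p - 1) * (a powr p + b powr p)"
proof -
  have h: "(1/2::real) powr (1 - p) = 2 powr (p - 1)"
    by (simp add: powr_divide powr_minus_divide[symmetric] powr_minus[symmetric])
  have h2: "(1 - 1/2::real) = 1/2" by simp
  have "(a + b) powr p \<le> (1/2) powr (1 - p) * a powr p + (1 - 1/2) powr (1 - p) * b powr p"
    by (rule split_ineq) (use assms in auto)
  then have "(a + b) powr p \<le> 2 powr (p - 1) * a powr p + 2 powr (p - 1) * b powr p"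
    unfolding h2 h .
  then show ?thesis by (simp add: algebra_simps)
qed

lemma fork:
  fixes z :: "nat \<Rightarrow> nat \<Rightarrow> real"
  assumes p: "1 < p" and x: "x \<in> lp_space p" and y: "y \<in> lp_space p" and z: "\<And>n. z n \<in> lp_space p"
    and xy: "lp_dist p x y \<le> A" and yz: "\<And>n. lp_dist p y (z n) \<le> A"
    and sep: "\<And>n m. n \<noteq> m \<Longrightarrow> \<sigma> \<le> lp_dist p (z n) (z m)" and \<sigma>: "0 < \<sigma>"
  shows "\<exists>n. lp_dist p x (z n) powr p \<le> (2 * A) powr p - (2 powr (p - 1) - 1) / 4 * \<sigma> powr p"
proof -
  have p1: "1 \<le> p" using p by simp
  have A0: "0 \<le> A" using yz[of 0] lp_dist_nonneg[of p y "z 0"] by linarith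
  define Ny where "Ny = psum p y powr (1/p)"
  have zb: "psum p (z n) \<le> (Ny + A) powr p" for n
  proof -
    have "psum p (\<lambda>i. y i + (z n i - y i)) powr (1/p) \<le> Ny + psum p (\<lambda>i. z n i - y i) powr (1/p)"
      unfolding Ny_def by (rule minkowski(2)[OF p1 y lp_diff[OF p1 z y]])
    also have "psum p (\<lambda>i. z n i - y i) powr (1/p) = lp_dist p (z n) y" by (simp add: lp_dist_psum)
    also have "\<dots> \<le> A" using yz[of n] by (simp add: lp_dist_sym)
    finally have "psum p (z n) powr (1/p) \<le> Ny + A" by simp
    then have "(psum p (z n) powr (1/p)) powr p \<le> (Ny + A) powr p"
      using p by (intro powr_mono2) auto
    then show ?thesis using p psum_nonneg[OF z[of n]] by (simp add: powr_powr)
  qed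
  obtain r w where r: "strict_mono r" and w: "w \<in> lp_space p"
    and rw: "\<And>i. (\<lambda>n. z (r n) i) \<longlonglongrightarrow> w i"
    using extract_sub[of p z "(Ny + A) powr p"] p z zb by blast
  define e where "e n i = z (r n) i - w i" for n i
  have e: "e n \<in> lp_space p" for n unfolding e_def by (rule lp_diff[OF p1 z w])
  define Nw where "Nw = psum p w powr (1/p)"
  have eb: "psum p (e n) \<le> ((Ny + A) + Nw) powr p" for n
  proof -
    have "psum p (\<lambda>i. z (r n) i + (- w i)) powr (1/p) \<le> psum p (z (r n)) powr (1/p) + psum p (\<lambda>i. - w i) powr (1/p)"
      by (rule minkowski(2)[OF p1 z lp_uminus[OF w]])
    also have "psum p (z (r n)) powr (1/p) \<le> Ny + A"
    proof -
      have "psum p (z (r n)) powr (1/p) \<le> ((Ny + A) powr p) powr (1/p)"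
        using zb[of "r n"] p psum_nonneg[OF z] by (intro powr_mono2) auto
      also have "\<dots> = Ny + A" using p A0 by (simp add: powr_powr Ny_def)
      finally show ?thesis .
    qed
    finally have "psum p (e n) powr (1/p) \<le> (Ny + A) + Nw"
      by (simp add: e_def[abs_def] psum_uminus Nw_def)
    then have "(psum p (e n) powr (1/p)) powr p \<le> ((Ny + A) + Nw) powr p"
      using p by (intro powr_mono2) auto
    then show ?thesis using p psum_nonneg[OF e[of n]] by (simp add: powr_powr)
  qed
  have ebb: "\<bar>psum p (e n)\<bar> \<le> ((Ny + A) + Nw) powr p" for n
    using eb[of n] psum_nonneg[OF e[of n]] by simp
  obtain q where q: "strict_mono q" and qc: "convergent ((\<lambda>n. psum p (e n)) \<circ> q)"
    using bdd_subseq[of "\<lambda>n. psum p (e n)", OF ebb] by blast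
  define \<mu> where "\<mu> = lim ((\<lambda>n. psum p (e n)) \<circ> q)"
  have mu: "(\<lambda>n. psum p (e (q n))) \<longlonglongrightarrow> \<mu>"
    unfolding \<mu>_def using qc convergent_LIMSEQ_iff by (auto simp: o_def)
  define e' where "e' n = e (q n)" for n
  have e'pw: "(\<lambda>n. e' n i) \<longlonglongrightarrow> 0" for i
  proof -
    have "(\<lambda>n. z (r n) i - w i) \<longlonglongrightarrow> w i - w i" by (intro tendsto_diff rw tendsto_const)
    then have "(\<lambda>n. e n i) \<longlonglongrightarrow> 0" by (simp add: e_def)
    then show ?thesis unfolding e'_def using LIMSEQ_subseq_LIMSEQ[OF _ q] by (auto simp: o_def)
  qed
  have key: "(\<lambda>n. psum p (\<lambda>i. u i + - e' n i)) \<longlonglongrightarrow> psum p u + \<mu>" if u: "u \<in> lp_space p" for u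
  proof -
    have "(\<lambda>n. psum p (\<lambda>i. u i + - e' n i) - psum p u - psum p (\<lambda>i. - e' n i)) \<longlonglongrightarrow> 0"
    proof (rule asym[OF p u])
      show "(\<lambda>i. - e' n i) \<in> lp_space p" for n unfolding e'_def by (rule lp_uminus[OF e])
      show "psum p (\<lambda>i. - e' n i) \<le> ((Ny + A) + Nw) powr p" for n
        unfolding psum_uminus e'_def by (rule eb)
      show "(\<lambda>n. - e' n i) \<longlonglongrightarrow> 0" for i using tendsto_minus[OF e'pw[of i]] by simp
    qed
    then have "(\<lambda>n. (psum p (\<lambda>i. u i + - e' n i) - psum p u - psum p (\<lambda>i. - e' n i)) + psum p u + psum p (e' n)) \<longlonglongrightarrow> 0 + psum p u + \<mu>"
      using mu unfolding e'_def by (intro tendsto_add tendsto_const) auto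
    then show ?thesis by (simp add: psum_uminus)
  qed
  define z' where "z' n = z (r (q n))" for n
  have e'z: "e' n i = z' n i - w i" for n i unfolding e'_def e_def z'_def by simp
  have yw: "y - w \<in> lp_space p" "(\<lambda>i. y i - w i) \<in> lp_space p" using lp_diff[OF p1 y w] by (auto simp: fun_diff_def)
  have "(\<lambda>n. psum p (\<lambda>i. y i - z' n i)) \<longlonglongrightarrow> psum p (\<lambda>i. y i - w i) + \<mu>"
    using key[OF yw(2)] by (simp add: e'z)
  moreover have "psum p (\<lambda>i. y i - z' n i) \<le> A powr p" for n
  proof -
    have "psum p (\<lambda>i. y i - z' n i) = lp_dist p y (z' n) powr p"
      unfolding z'_def by (rule lp_dist_pow[OF p1 y z, symmetric])
    also have "\<dots> \<le> A powr p" unfolding z'_def using yz p by (intro powr_mono2) (auto simp: lp_dist_nonneg)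
    finally show ?thesis .
  qed
  ultimately have ywA: "psum p (\<lambda>i. y i - w i) + \<mu> \<le> A powr p" by (intro LIMSEQ_le_const2) auto
  have rq: "strict_mono (r \<circ> q)" using r q by (rule strict_mono_o)
  have sepn: "\<sigma> powr p \<le> psum p (e' n) + \<mu>" for n
  proof -
    have "(\<lambda>m. psum p (\<lambda>i. e' n i + - e' m i)) \<longlonglongrightarrow> psum p (e' n) + \<mu>"
      using key[of "e' n"] e unfolding e'_def by auto
    moreover have "\<forall>\<^sub>F m in sequentially. \<sigma> powr p \<le> psum p (\<lambda>i. e' n i + - e' m i)"
    proof (rule eventually_sequentiallyI[of "Suc n"])
      fix m assume m: "Suc n \<le> m"
      then have "r (q n) \<noteq> r (q m)" using strict_mono_less[OF rq, of n m] by auto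
      then have "\<sigma> \<le> lp_dist p (z' n) (z' m)" unfolding z'_def by (rule sep)
      then have "\<sigma> powr p \<le> lp_dist p (z' n) (z' m) powr p" using \<sigma> p by (intro powr_mono2) auto
      also have "\<dots> = psum p (\<lambda>i. z' n i - z' m i)" unfolding z'_def by (rule lp_dist_pow[OF p1 z z])
      also have "\<dots> = psum p (\<lambda>i. e' n i + - e' m i)" by (simp add: e'z)
      finally show "\<sigma> powr p \<le> psum p (\<lambda>i. e' n i + - e' m i)" .
    qed
    ultimately show ?thesis by (rule tendsto_lowerbound) simp
  qed
  have mu2: "\<sigma> powr p \<le> \<mu> + \<mu>"
  proof -
    have "(\<lambda>n. psum p (e' n) + \<mu>) \<longlonglongrightarrow> \<mu> + \<mu>" using mu unfolding e'_def by (intro tendsto_add tendsto_const)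
    then show ?thesis using sepn by (intro LIMSEQ_le_const) auto
  qed
  have xw: "(\<lambda>i. x i - w i) \<in> lp_space p" using lp_diff[OF p1 x w] .
  have lim_x: "(\<lambda>n. psum p (\<lambda>i. x i - z' n i)) \<longlonglongrightarrow> psum p (\<lambda>i. x i - w i) + \<mu>"
    using key[OF xw] by (simp add: e'z)
  define b where "b = psum p (\<lambda>i. y i - w i) powr (1/p)"
  have b0: "0 \<le> b" unfolding b_def by simp
  have bp: "b powr p = psum p (\<lambda>i. y i - w i)" unfolding b_def
    using psum_nonneg[OF yw(2)] p by (simp add: powr_powr)
  have "psum p (\<lambda>i. x i - w i) powr (1/p) = lp_dist p x w" by (simp add: lp_dist_psum)
  also have "\<dots> \<le> lp_dist p x y + lp_dist p y w" by (rule lp_dist_tri[OF p1 x y w])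
  also have "\<dots> \<le> A + b" using xy by (simp add: b_def lp_dist_psum)
  finally have "(psum p (\<lambda>i. x i - w i) powr (1/p)) powr p \<le> (A + b) powr p"
    using p by (intro powr_mono2) auto
  then have "psum p (\<lambda>i. x i - w i) \<le> (A + b) powr p"
    using psum_nonneg[OF xw] p by (simp add: powr_powr)
  also have "\<dots> \<le> 2 powr (p - 1) * (A powr p + b powr p)" by (rule pow_sum_le[OF p1 A0 b0])
  finally have xwb: "psum p (\<lambda>i. x i - w i) \<le> 2 powr (p - 1) * (A powr p + psum p (\<lambda>i. y i - w i))"
    using bp by simp
  define c where "c = 2 powr (p - 1)"
  have c1: "1 < c" unfolding c_def using p by simp
  have twoA: "(2 * A) powr p = 2 * c * A powr p"
  proof -
    have "(2 * A) powr p = 2 powr p * A powr p" using A0 by (simp add: powr_mult)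
    also have "2 powr p = 2 * c" unfolding c_def by (simp add: powr_diff)
    finally show ?thesis by simp
  qed
  have lim_le: "psum p (\<lambda>i. x i - w i) + \<mu> \<le> (2 * A) powr p - (c - 1) / 2 * \<sigma> powr p"
  proof -
    have "c * (A powr p + psum p (\<lambda>i. y i - w i)) \<le> c * (A powr p + (A powr p - \<mu>))"
      using ywA c1 by (intro mult_left_mono) auto
    then have "psum p (\<lambda>i. x i - w i) + \<mu> \<le> c * (A powr p + (A powr p - \<mu>)) + \<mu>"
      using xwb unfolding c_def[symmetric] by linarith
    also have "\<dots> = (2 * A) powr p - (c - 1) * \<mu>" using twoA by (simp add: algebra_simps)
    also have "\<dots> \<le> (2 * A) powr p - (c - 1) / 2 * \<sigma> powr p"
    proof -
      have "(c - 1) * (\<sigma> powr p / 2) \<le> (c - 1) * \<mu>"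
        using mu2 c1 by (intro mult_left_mono) auto
      then show ?thesis by simp
    qed
    finally show ?thesis .
  qed
  have sp: "0 < \<sigma> powr p" using \<sigma> by simp
  have strict: "psum p (\<lambda>i. x i - w i) + \<mu> < (2 * A) powr p - (c - 1) / 4 * \<sigma> powr p"
  proof -
    have "(c - 1) / 4 * \<sigma> powr p < (c - 1) / 2 * \<sigma> powr p" using c1 sp by (intro mult_strict_right_mono) auto
    then show ?thesis using lim_le by linarith
  qed
  then have "\<forall>\<^sub>F n in sequentially. psum p (\<lambda>i. x i - z' n i) < (2 * A) powr p - (c - 1) / 4 * \<sigma> powr p"
    using lim_x order_tendstoD(2) by blast
  then obtain n where n: "psum p (\<lambda>i. x i - z' n i) < (2 * A) powr p - (c - 1) / 4 * \<sigma> powr p"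
    using eventually_sequentially by auto
  have "lp_dist p x (z (r (q n))) powr p = psum p (\<lambda>i. x i - z' n i)"
    unfolding z'_def by (rule lp_dist_pow[OF p1 x z])
  then show ?thesis using n unfolding c_def by (intro exI[of _ "r (q n)"]) simp
qed



lemma lcp_append: "lcp (u @ xs) (u @ ys) = length u + lcp xs ys"
  by (induction u) auto

lemma lcp_nil1[simp]: "lcp [] ys = 0" and lcp_nil2[simp]: "lcp xs [] = 0"
  by (cases ys; simp) (cases xs; simp)

lemma lcp_le: "lcp xs ys \<le> length xs" "lcp xs ys \<le> length ys"
  by (induction xs ys rule: lcp.induct) auto

lemma lcp_prefix: "lcp u (u @ r) = length u"
  using lcp_append[of u "[]" r] by simp

lemma lcp_self: "lcp u u = length u"
  using lcp_prefix[of u "[]"] by simp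

lemma lcp_sym: "lcp xs ys = lcp ys xs"
  by (induction xs ys rule: lcp.induct) auto

lemma tree_dist_edge: "tree_dist a (a @ [i]) = 1"
  unfolding tree_dist_def using lcp_prefix[of a "[i]"] by simp

lemma tree_dist_sib2: "j \<noteq> k \<Longrightarrow> tree_dist (u @ [i, j]) (u @ [i, k]) = 2"
  unfolding tree_dist_def using lcp_append[of "u @ [i]" "[j]" "[k]"] by simp

lemma tree_dist_self: "tree_dist a a = 0"
  unfolding tree_dist_def by (simp add: lcp_self)

lemma tree_dist_pos: "a \<noteq> b \<Longrightarrow> 1 \<le> tree_dist a b"
proof (induction a b rule: lcp.induct)
  case (1 x xs y ys)
  then show ?case
  proof (cases "x = y")
    case True
    then have "xs \<noteq> ys" using 1 by simp
    then have "1 \<le> tree_dist xs ys" using 1 True by simp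
    then show ?thesis using True unfolding tree_dist_def by simp
  next
    case False
    then show ?thesis unfolding tree_dist_def by simp
  qed
next
  case ("2_1" ys)
  then show ?case unfolding tree_dist_def by (cases ys) auto
next
  case ("2_2" xs)
  then show ?case unfolding tree_dist_def by (cases xs) auto
qed

fun psi_aux :: "(nat list \<Rightarrow> nat \<Rightarrow> nat) \<Rightarrow> nat list \<Rightarrow> nat list \<Rightarrow> nat list" where
  "psi_aux sel u [] = u"
| "psi_aux sel u (i # xs) = psi_aux sel (u @ [i, sel u i]) xs"

lemma psi_aux_len: "length (psi_aux sel u xs) = length u + 2 * length xs"
  by (induction xs arbitrary: u) auto

lemma psi_aux_prefix: "\<exists>R. psi_aux sel u xs = u @ R"
proof (induction xs arbitrary: u)
  case (Cons i xs)
  then obtain R where "psi_aux sel (u @ [i, sel u i]) xs = (u @ [i, sel u i]) @ R" by blast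
  then show ?case by auto
qed auto

lemma psi_aux_snoc: "psi_aux sel u (xs @ [i]) = psi_aux sel u xs @ [i, sel (psi_aux sel u xs) i]"
  by (induction xs arbitrary: u) auto

lemma psi_aux_lcp: "lcp (psi_aux sel u a) (psi_aux sel u b) = length u + 2 * lcp a b"
proof (induction a arbitrary: u b)
  case Nil
  obtain R where "psi_aux sel u b = u @ R" using psi_aux_prefix by blast
  then show ?case by (simp add: lcp_prefix)
next
  case (Cons i a)
  show ?case
  proof (cases b)
    case Nil
    obtain R where "psi_aux sel u (i # a) = u @ R" using psi_aux_prefix by blast
    then show ?thesis using Nil by (simp add: lcp_prefix lcp_sym[of "u @ R"])
  next
    case (Cons j b')
    show ?thesis
    proof (cases "i = j")
      case True
      then show ?thesis using Cons.IH[of "u @ [i, sel u i]" b'] Cons by simp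
    next
      case False
      obtain R1 where R1: "psi_aux sel (u @ [i, sel u i]) a = (u @ [i, sel u i]) @ R1" using psi_aux_prefix by blast
      obtain R2 where R2: "psi_aux sel (u @ [j, sel u j]) b' = (u @ [j, sel u j]) @ R2" using psi_aux_prefix by blast
      show ?thesis using Cons False R1 R2 lcp_append[of u "i # sel u i # R1" "j # sel u j # R2"] by simp
    qed
  qed
qed

lemma psi_dist: "tree_dist (psi_aux sel [] a) (psi_aux sel [] b) = 2 * tree_dist a b"
proof -
  have l: "lcp a b \<le> length a" "lcp a b \<le> length b" by (rule lcp_le)+
  show ?thesis unfolding tree_dist_def psi_aux_lcp psi_aux_len using l by simp
qed

definition kappa :: "real \<Rightarrow> real" where "kappa p = (2 powr (p - 1) - 1) / 4"

lemma kappa_pos: "1 < p \<Longrightarrow> 0 < kappa p"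
  unfolding kappa_def by simp

definition good :: "real \<Rightarrow> nat \<Rightarrow> real \<Rightarrow> real \<Rightarrow> (nat list \<Rightarrow> nat \<Rightarrow> real) \<Rightarrow> bool" where
  "good p m s L g \<longleftrightarrow> (\<forall>a\<in>tree_vertices m. g a \<in> lp_space p)
     \<and> (\<forall>a\<in>tree_vertices m. \<forall>b\<in>tree_vertices m. s * tree_dist a b \<le> lp_dist p (g a) (g b))
     \<and> (\<forall>a i. length a < m \<longrightarrow> lp_dist p (g a) (g (a @ [i])) \<le> L)"

lemma good_mono: "good p m s L g \<Longrightarrow> m' \<le> m \<Longrightarrow> good p m' s L g"
  unfolding good_def tree_vertices_def by auto

lemma good_L: "good p m s L g \<Longrightarrow> 1 \<le> m \<Longrightarrow> s \<le> L"
proof -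
  assume g: "good p m s L g" and m: "1 \<le> m"
  have "s * tree_dist [] ([] @ [0]) \<le> lp_dist p (g []) (g ([] @ [0]))"
    using g m unfolding good_def tree_vertices_def by auto
  also have "\<dots> \<le> L" using g m unfolding good_def by (metis One_nat_def list.size(3) zero_less_Suc less_le_trans)
  finally show ?thesis using tree_dist_edge[of "[]" 0] by simp
qed

lemma step:
  assumes p: "1 < p" and s: "0 < s" and m: "1 \<le> m" and g: "good p (2 * m) s L g"
  shows "\<exists>g'. good p m (2 * s) (((2 * L) powr p - kappa p * (2 * s) powr p) powr (1/p)) g'
     \<and> 0 \<le> (2 * L) powr p - kappa p * (2 * s) powr p"
proof -
  define Q where "Q = (2 * L) powr p - kappa p * (2 * s) powr p"
  define sel where "sel u i = (SOME j. lp_dist p (g u) (g (u @ [i, j])) powr p \<le> Q)" for u i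
  have gm: "\<And>a. length a \<le> 2 * m \<Longrightarrow> g a \<in> lp_space p"
    and glo: "\<And>a b. length a \<le> 2 * m \<Longrightarrow> length b \<le> 2 * m \<Longrightarrow> s * tree_dist a b \<le> lp_dist p (g a) (g b)"
    and ged: "\<And>a i. length a < 2 * m \<Longrightarrow> lp_dist p (g a) (g (a @ [i])) \<le> L"
    using g unfolding good_def tree_vertices_def by auto
  have selprop: "lp_dist p (g u) (g (u @ [i, sel u i])) powr p \<le> Q" if u: "length u + 2 \<le> 2 * m" for u i
  proof -
    have "\<exists>j. lp_dist p (g u) (g (u @ [i, j])) powr p \<le> Q"
      unfolding Q_def kappa_def
    proof (rule fork[OF p])
      show "g u \<in> lp_space p" "g (u @ [i]) \<in> lp_space p" using u by (auto intro: gm)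
      show "g (u @ [i, j]) \<in> lp_space p" for j using u by (auto intro: gm)
      show "lp_dist p (g u) (g (u @ [i])) \<le> L" using u by (intro ged) auto
      show "lp_dist p (g (u @ [i])) (g (u @ [i, j])) \<le> L" for j
        using ged[of "u @ [i]" j] u by simp
      show "2 * s \<le> lp_dist p (g (u @ [i, j])) (g (u @ [i, k]))" if "j \<noteq> k" for j k
        using glo[of "u @ [i, j]" "u @ [i, k]"] u tree_dist_sib2[OF that, of u i] by simp
      show "0 < 2 * s" using s by simp
    qed
    then show ?thesis unfolding sel_def by (rule someI_ex)
  qed
  have "lp_dist p (g []) (g ([] @ [0, sel [] 0])) powr p \<le> Q" using m by (intro selprop) simp
  then have Q0: "0 \<le> Q" using powr_ge_zero[of "lp_dist p (g []) (g ([] @ [0, sel [] 0]))" p] by linarith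
  define g' where "g' a = g (psi_aux sel [] a)" for a
  have "good p m (2 * s) (Q powr (1/p)) g'"
    unfolding good_def tree_vertices_def
  proof (intro conjI ballI allI impI)
    fix a :: "nat list" assume "a \<in> {xs. length xs \<le> m}"
    then show "g' a \<in> lp_space p" unfolding g'_def by (intro gm) (simp add: psi_aux_len)
  next
    fix a b :: "nat list" assume a: "a \<in> {xs. length xs \<le> m}" and b: "b \<in> {xs. length xs \<le> m}"
    have "2 * s * tree_dist a b = s * tree_dist (psi_aux sel [] a) (psi_aux sel [] b)"
      by (simp add: psi_dist)
    also have "\<dots> \<le> lp_dist p (g' a) (g' b)" unfolding g'_def using a b
      by (intro glo) (auto simp: psi_aux_len)
    finally show "2 * s * tree_dist a b \<le> lp_dist p (g' a) (g' b)" .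
  next
    fix a :: "nat list" and i assume a: "length a < m"
    have "lp_dist p (g' a) (g' (a @ [i])) powr p \<le> Q"
      unfolding g'_def psi_aux_snoc using a by (intro selprop) (simp add: psi_aux_len)
    then have "(lp_dist p (g' a) (g' (a @ [i])) powr p) powr (1/p) \<le> Q powr (1/p)"
      using p by (intro powr_mono2) auto
    then show "lp_dist p (g' a) (g' (a @ [i])) \<le> Q powr (1/p)"
      using p lp_dist_nonneg[of p] by (simp add: powr_powr)
  qed
  then show ?thesis using Q0 unfolding Q_def by blast
qed

lemma iterate:
  assumes p: "1 < p"
  shows "good p (2 ^ k) s L g \<Longrightarrow> 0 < s \<Longrightarrow> kappa p * k \<le> (L / s) powr p - 1"
proof (induction k arbitrary: s L g)
  case 0
  have "s \<le> L" using good_L[OF 0(1)] by simp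
  then have "1 \<le> L / s" using 0 by simp
  then have "1 \<le> (L / s) powr p" using p by (simp add: ge_one_powr_ge_zero)
  then show ?case by simp
next
  case (Suc k)
  have L: "s \<le> L" using good_L[OF Suc(2)] by simp
  define Q where "Q = (2 * L) powr p - kappa p * (2 * s) powr p"
  obtain g' where g': "good p (2 ^ k) (2 * s) (Q powr (1/p)) g'" and Q0: "0 \<le> Q"
    using step[OF p _ _ Suc(2)[unfolded power_Suc]] Suc(3) unfolding Q_def by auto
  have IH: "kappa p * k \<le> (Q powr (1/p) / (2 * s)) powr p - 1"
    using Suc.IH[OF g'] Suc(3) by simp
  have "(Q powr (1/p) / (2 * s)) powr p = Q / (2 * s) powr p"
    using Q0 Suc(3) p by (simp add: powr_divide powr_powr)
  also have "\<dots> = (2 * L) powr p / (2 * s) powr p - kappa p"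
    unfolding Q_def using Suc(3) by (simp add: diff_divide_distrib)
  also have "(2 * L) powr p / (2 * s) powr p = (L / s) powr p"
    using L Suc(3) by (simp add: powr_divide[symmetric])
  finally show ?case using IH by (simp add: algebra_simps)
qed

lemma lower_core:
  fixes f :: "nat list \<Rightarrow> nat \<Rightarrow> real"
  assumes p: "1 < p" and f: "\<And>a. a \<in> tree_vertices h \<Longrightarrow> f a \<in> lp_space p"
    and up: "\<And>a b. a \<in> tree_vertices h \<Longrightarrow> b \<in> tree_vertices h \<Longrightarrow> lp_dist p (f a) (f b) \<le> L * tree_dist a b"
    and lo: "\<And>a b. a \<in> tree_vertices h \<Longrightarrow> b \<in> tree_vertices h \<Longrightarrow> tree_dist a b \<le> D * lp_dist p (f a) (f b)"
    and D: "0 < D" and k: "2 ^ k \<le> h"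
  shows "kappa p * k \<le> (L * D) powr p - 1"
proof -
  have "good p h (1 / D) L f"
    unfolding good_def
  proof (intro conjI ballI allI impI)
    fix a b assume a: "a \<in> tree_vertices h" and b: "b \<in> tree_vertices h"
    show "1 / D * tree_dist a b \<le> lp_dist p (f a) (f b)"
      using lo[OF a b] D by (simp add: field_simps)
  next
    fix a :: "nat list" and i assume a: "length a < h"
    have "lp_dist p (f a) (f (a @ [i])) \<le> L * tree_dist a (a @ [i])"
      using a by (intro up) (auto simp: tree_vertices_def)
    then show "lp_dist p (f a) (f (a @ [i])) \<le> L" by (simp add: tree_dist_edge)
  qed (use f in auto)
  then have "good p (2 ^ k) (1 / D) L f" using k by (rule good_mono)
  from iterate[OF p this] D show ?thesis by simp
qed



lemma lp_dist_self: "lp_dist p x x = 0"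
  unfolding lp_dist_def by simp

lemma lp_dist_pos:
  assumes p: "1 \<le> p" and x: "x \<in> lp_space p" and y: "y \<in> lp_space p" and ne: "x \<noteq> y"
  shows "0 < lp_dist p x y"
proof -
  have d: "(\<lambda>i. x i - y i) \<in> lp_space p" by (rule lp_diff[OF p x y])
  have "(\<lambda>i. x i - y i) \<noteq> (\<lambda>i. 0)" using ne by (auto simp: fun_eq_iff)
  then have "psum p (\<lambda>i. x i - y i) \<noteq> 0" using psum_zero_iff[OF d] by simp
  then have "0 < psum p (\<lambda>i. x i - y i)" using psum_nonneg[OF d] by linarith
  then show ?thesis unfolding lp_dist_psum by simp
qed

lemma log_floor_facts:
  fixes h :: nat
  assumes h: "2 \<le> h"
  obtains k :: nat where "2 ^ k \<le> h" "ln (real h) / (2 * ln 2) \<le> real k"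
proof -
  define k where "k = nat \<lfloor>log 2 (real h)\<rfloor>"
  have lg1: "1 \<le> log 2 (real h)" using h by simp
  have kk: "real k = real_of_int \<lfloor>log 2 (real h)\<rfloor>" unfolding k_def using lg1 by simp
  have k1: "real k \<le> log 2 (real h)" using kk by linarith
  have k2: "log 2 (real h) < real k + 1" using kk by linarith
  have "1 \<le> \<lfloor>log 2 (real h)\<rfloor>" using lg1 by (simp add: le_floor_iff)
  then have k3: "1 \<le> real k" using kk by linarith
  have "2 ^ k \<le> h"
  proof -
    have "(2::real) powr real k \<le> 2 powr log 2 (real h)" using k1 by simp
    also have "\<dots> = real h" using h by simp
    finally have "real (2 ^ k) \<le> real h" by (simp add: powr_realpow)
    then show ?thesis by linarith
  qed
  moreover have "ln (real h) / (2 * ln 2) \<le> real k"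
  proof -
    have "log 2 (real h) \<le> 2 * real k" using k2 k3 by linarith
    then show ?thesis by (simp add: log_def field_simps)
  qed
  ultimately show ?thesis using that by blast
qed

lemma lower_bound:
  assumes p: "1 < p" and h: "2 \<le> h"
  shows "ereal ((kappa p / (2 * ln 2)) powr (1/p) * ln (real h) powr (1/p))
    \<le> distortion (tree_vertices h) tree_dist (lp_space p) (lp_dist p)"
  unfolding distortion_def
proof (rule INF_greatest)
  fix f assume "f \<in> {f. inj_on f (tree_vertices h) \<and> f ` tree_vertices h \<subseteq> lp_space p}"
  then have inj: "inj_on f (tree_vertices h)" and fl: "\<And>a. a \<in> tree_vertices h \<Longrightarrow> f a \<in> lp_space p"
    by auto
  have p1: "1 \<le> p" using p by simp
  define T where "T = tree_vertices h"
  define P where "P = {(u, v). u \<in> T \<and> v \<in> T \<and> u \<noteq> v}"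
  define Lp where "Lp = Lip T tree_dist (lp_dist p) f"
  define Li where "Li = Lip_inv T tree_dist (lp_dist p) f"
  have uv: "([], [0]) \<in> P" using h unfolding P_def T_def tree_vertices_def by auto
  have dpos: "0 < lp_dist p (f u) (f v)" if "u \<in> T" "v \<in> T" "u \<noteq> v" for u v
    using lp_dist_pos[OF p1 fl fl] inj that unfolding T_def inj_on_def by blast
  have tpos: "1 \<le> tree_dist u v" if "u \<noteq> v" for u v :: "nat list" using tree_dist_pos that .
  have Lp_up: "ereal (lp_dist p (f u) (f v) / tree_dist u v) \<le> Lp" if "(u, v) \<in> P" for u v
    unfolding Lp_def Lip_def P_def[symmetric] T_def[symmetric] using that
    by (rule SUP_upper2[of "(u, v)"]) auto
  have Li_up: "ereal (tree_dist u v / lp_dist p (f u) (f v)) \<le> Li" if "(u, v) \<in> P" for u v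
    unfolding Li_def Lip_inv_def P_def[symmetric] T_def[symmetric] using that
    by (rule SUP_upper2[of "(u, v)"]) auto
  have Lp0: "0 < Lp"
  proof -
    have "0 < lp_dist p (f []) (f [0]) / tree_dist [] [0]"
      using dpos[of "[]" "[0]"] tpos[of "[]" "[0]"] uv unfolding P_def by auto
    then show ?thesis using Lp_up[OF uv] by (meson ereal_less(2) less_le_trans)
  qed
  have Li0: "0 < Li"
  proof -
    have "0 < tree_dist [] [0] / lp_dist p (f []) (f [0])"
      using dpos[of "[]" "[0]"] tpos[of "[]" "[0]"] uv unfolding P_def by auto
    then show ?thesis using Li_up[OF uv] by (meson ereal_less(2) less_le_trans)
  qed
  have "ereal ((kappa p / (2 * ln 2)) powr (1/p) * ln (real h) powr (1/p)) \<le> Lp * Li"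
  proof (cases "Lp = \<infinity> \<or> Li = \<infinity>")
    case True
    then have inf: "Lp * Li = \<infinity>" using Lp0 Li0 by (auto simp: ereal_mult_infty ereal_infty_mult)
    show ?thesis by (simp only: inf ereal_less_eq(1))
  next
    case False
    then obtain L D where L: "Lp = ereal L" and D: "Li = ereal D" using Lp0 Li0
    proof -
      have "Lp \<noteq> - \<infinity>" "Li \<noteq> - \<infinity>" using Lp0 Li0 by auto
      then have "\<bar>Lp\<bar> \<noteq> \<infinity>" "\<bar>Li\<bar> \<noteq> \<infinity>" using False by auto
      then have "Lp = ereal (real_of_ereal Lp)" "Li = ereal (real_of_ereal Li)"
        by (simp_all add: ereal_real')
      then show ?thesis using that by blast
    qed
    have D0: "0 < D" using Li0 D by simp
    have up: "lp_dist p (f a) (f b) \<le> L * tree_dist a b" if "a \<in> tree_vertices h" "b \<in> tree_vertices h" for a b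
    proof (cases "a = b")
      case True then show ?thesis by (simp add: lp_dist_self tree_dist_self)
    next
      case False
      then have "(a, b) \<in> P" using that unfolding P_def T_def by auto
      then have "lp_dist p (f a) (f b) / tree_dist a b \<le> L" using Lp_up L by simp
      then show ?thesis using tpos[OF False] by (simp add: divide_le_eq mult.commute)
    qed
    have lo: "tree_dist a b \<le> D * lp_dist p (f a) (f b)" if "a \<in> tree_vertices h" "b \<in> tree_vertices h" for a b
    proof (cases "a = b")
      case True then show ?thesis by (simp add: lp_dist_self tree_dist_self)
    next
      case False
      then have ab: "(a, b) \<in> P" using that unfolding P_def T_def by auto
      then have "tree_dist a b / lp_dist p (f a) (f b) \<le> D" using Li_up D by simp
      moreover have "0 < lp_dist p (f a) (f b)" using dpos that False unfolding T_def by blast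
      ultimately show ?thesis by (simp add: divide_le_eq mult.commute)
    qed
    obtain k :: nat where k1: "2 ^ k \<le> h" and k2: "ln (real h) / (2 * ln 2) \<le> real k"
      using log_floor_facts[OF h] by blast
    have core: "kappa p * k \<le> (L * D) powr p - 1"
      by (rule lower_core[OF p fl up lo D0 k1]) (auto simp: T_def)
    have kp: "0 < kappa p" using kappa_pos[OF p] .
    have LD0: "0 \<le> L * D"
    proof -
      have "0 < L" using Lp0 L by simp
      then show ?thesis using D0 by simp
    qed
    have "kappa p / (2 * ln 2) * ln (real h) \<le> kappa p * k"
      using k2 kp by (simp add: mult_left_mono divide_le_eq field_simps)
    also have "\<dots> \<le> (L * D) powr p" using core by simp
    finally have A: "kappa p / (2 * ln 2) * ln (real h) \<le> (L * D) powr p" .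
    have lnh: "0 \<le> ln (real h)" using h by simp
    have "(kappa p / (2 * ln 2)) powr (1/p) * ln (real h) powr (1/p)
        = (kappa p / (2 * ln 2) * ln (real h)) powr (1/p)"
      using kp lnh by (subst powr_mult) auto
    also have "\<dots> \<le> ((L * D) powr p) powr (1/p)"
      using A p kp lnh by (intro powr_mono2) auto
    also have "\<dots> = L * D" using LD0 p by (simp add: powr_powr)
    finally show ?thesis using L D by simp
  qed
  then show "ereal ((kappa p / (2 * ln 2)) powr (1/p) * ln (real h) powr (1/p))
      \<le> Lip (tree_vertices h) tree_dist (lp_dist p) f * Lip_inv (tree_vertices h) tree_dist (lp_dist p) f"
    by (simp add: Lp_def Li_def T_def)
qed



lemma lcp_take: "j \<le> length a \<Longrightarrow> j \<le> length b \<Longrightarrow> take j a = take j b \<Longrightarrow> j \<le> lcp a b"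
proof (induction a b arbitrary: j rule: lcp.induct)
  case (1 x xs y ys)
  then show ?case by (cases j) auto
qed auto

lemma take_lcp: "take (lcp a b) a = take (lcp a b) b"
  by (induction a b rule: lcp.induct) auto

lemma path_up:
  assumes g: "\<And>a. length a \<le> h \<Longrightarrow> g a \<in> lp_space p" and p: "1 \<le> p"
    and ed: "\<And>a i. length a < h \<Longrightarrow> lp_dist p (g a) (g (a @ [i])) \<le> L"
  shows "length a \<le> h \<Longrightarrow> n \<le> length a \<Longrightarrow> lp_dist p (g (take n a)) (g a) \<le> L * real (length a - n)"
proof (induction a arbitrary: n rule: rev_induct)
  case Nil
  then show ?case by (simp add: lp_dist_self)
next
  case (snoc i x)
  show ?case
  proof (cases "n = length x + 1")
    case True
    then show ?thesis by (simp add: lp_dist_self)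
  next
    case False
    then have n: "n \<le> length x" using snoc by simp
    have "lp_dist p (g (take n (x @ [i]))) (g (x @ [i])) = lp_dist p (g (take n x)) (g (x @ [i]))"
      using n by simp
    also have "\<dots> \<le> lp_dist p (g (take n x)) (g x) + lp_dist p (g x) (g (x @ [i]))"
      using snoc.prems by (intro lp_dist_tri[OF p] g) auto
    also have "\<dots> \<le> L * real (length x - n) + L"
      using snoc.IH[OF _ n] snoc.prems ed[of x i] by (intro add_mono) auto
    also have "\<dots> = L * real (length (x @ [i]) - n)" using n by (simp add: algebra_simps of_nat_diff)
    finally show ?thesis .
  qed
qed

lemma path_lip:
  assumes g: "\<And>a. length a \<le> h \<Longrightarrow> g a \<in> lp_space p" and p: "1 \<le> p"
    and ed: "\<And>a i. length a < h \<Longrightarrow> lp_dist p (g a) (g (a @ [i])) \<le> L"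
    and a: "length a \<le> h" and b: "length b \<le> h"
  shows "lp_dist p (g a) (g b) \<le> L * tree_dist a b"
proof -
  define c where "c = lcp a b"
  have c: "c \<le> length a" "c \<le> length b" unfolding c_def by (rule lcp_le)+
  have u: "take c a = take c b" unfolding c_def by (rule take_lcp)
  have "lp_dist p (g a) (g b) \<le> lp_dist p (g a) (g (take c a)) + lp_dist p (g (take c a)) (g b)"
    using a b by (intro lp_dist_tri[OF p] g) auto
  also have "lp_dist p (g a) (g (take c a)) \<le> L * real (length a - c)"
    using path_up[OF g p ed a c(1)] by (simp add: lp_dist_sym)
  also have "lp_dist p (g (take c a)) (g b) \<le> L * real (length b - c)"
    using path_up[OF g p ed b c(2)] u by simp
  also have "L * real (length a - c) + L * real (length b - c) = L * tree_dist a b"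
    unfolding tree_dist_def c_def[symmetric] using c by (simp add: algebra_simps of_nat_diff)
  finally show ?thesis by simp
qed

definition enc :: "nat \<times> nat list \<Rightarrow> nat" where "enc x = prod_encode (fst x, list_encode (snd x))"
definition dec :: "nat \<Rightarrow> nat \<times> nat list" where "dec n = (fst (prod_decode n), list_decode (snd (prod_decode n)))"

lemma dec_enc[simp]: "dec (enc x) = x"
  unfolding enc_def dec_def by simp

lemma enc_dec[simp]: "enc (dec n) = n"
  unfolding enc_def dec_def by simp

lemma inj_enc: "inj_on enc A"
  by (metis dec_enc inj_on_inverseI)

lemma fin_support:
  fixes G :: "nat \<times> nat list \<Rightarrow> real"
  assumes S: "finite S" and G: "\<And>x. x \<notin> S \<Longrightarrow> G x = 0"
  shows "(\<lambda>n. \<bar>G (dec n)\<bar> powr p) sums (\<Sum>x\<in>S. \<bar>G x\<bar> powr p)"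
proof -
  have "(\<lambda>n. \<bar>G (dec n)\<bar> powr p) sums (\<Sum>n\<in>enc ` S. \<bar>G (dec n)\<bar> powr p)"
  proof (rule sums_finite)
    show "finite (enc ` S)" using S by simp
    fix n assume "n \<notin> enc ` S"
    then have "dec n \<notin> S" by (metis enc_dec image_eqI)
    then show "\<bar>G (dec n)\<bar> powr p = 0" using G by simp
  qed
  also have "(\<Sum>n\<in>enc ` S. \<bar>G (dec n)\<bar> powr p) = (\<Sum>x\<in>S. \<bar>G x\<bar> powr p)"
    by (subst sum.reindex[OF inj_enc]) simp
  finally show ?thesis .
qed

definition Fv :: "real \<Rightarrow> nat \<Rightarrow> nat list \<Rightarrow> nat \<times> nat list \<Rightarrow> real" where
  "Fv p K a x = (if fst x \<le> K \<and> snd x \<noteq> [] \<and> take (length (snd x)) a = snd x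
     then real (min (length a - length (snd x) + 1) (2 ^ fst x)) / (2 ^ fst x) powr (1/p) else 0)"

definition emb :: "real \<Rightarrow> nat \<Rightarrow> nat list \<Rightarrow> nat \<Rightarrow> real" where
  "emb p K a n = Fv p K a (dec n)"

definition Supp :: "nat \<Rightarrow> nat list \<Rightarrow> (nat \<times> nat list) set" where
  "Supp K a = {..K} \<times> ((\<lambda>j. take j a) ` {1..length a})"

lemma finite_Supp: "finite (Supp K a)" unfolding Supp_def by simp

lemma Fv_supp: "x \<notin> Supp K a \<Longrightarrow> Fv p K a x = 0"
proof (rule ccontr)
  assume x: "x \<notin> Supp K a" and ne: "Fv p K a x \<noteq> 0"
  obtain k w where xw: "x = (k, w)" by (cases x)
  from ne have c: "k \<le> K" "w \<noteq> []" "take (length w) a = w" unfolding Fv_def xw by (auto split: if_splits)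
  have "min (length w) (length a) = length w" using arg_cong[OF c(3), of length] by simp
  then have "length w \<le> length a" by linarith
  moreover have "1 \<le> length w" using c(2) by (cases w) auto
  ultimately have "w \<in> (\<lambda>j. take j a) ` {1..length a}" using c(3) by force
  then show False using x c(1) unfolding xw Supp_def by auto
qed

lemma emb_lp: "emb p K a \<in> lp_space p"
proof -
  have "(\<lambda>n. \<bar>Fv p K a (dec n)\<bar> powr p) sums (\<Sum>x\<in>Supp K a. \<bar>Fv p K a x\<bar> powr p)"
    by (rule fin_support[OF finite_Supp Fv_supp])
  then show ?thesis unfolding lp_space_def emb_def by (auto simp: sums_iff)
qed

lemma Supp_mono: "Supp K a \<subseteq> Supp K (a @ [i])"
proof
  fix x assume "x \<in> Supp K a"
  then obtain k j where x: "x = (k, take j a)" "k \<le> K" "j \<in> {1..length a}" unfolding Supp_def by auto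
  then have "take j a = take j (a @ [i])" by simp
  then show "x \<in> Supp K (a @ [i])" using x unfolding Supp_def by force
qed

lemma Fv_b:
  assumes "j \<in> {1..length b}" "k \<le> K"
  shows "Fv p K b (k, take j b) = real (min (length b - j + 1) (2 ^ k)) / (2 ^ k) powr (1/p)"
  using assms unfolding Fv_def by (auto simp: min_def)

lemma Fv_a:
  assumes j: "j \<in> {1..length (a @ [i])}" and k: "k \<le> K"
  shows "Fv p K a (k, take j (a @ [i])) = real (min (length (a @ [i]) - j) (2 ^ k)) / (2 ^ k) powr (1/p)"
proof (cases "j \<le> length a")
  case True
  then have "take j (a @ [i]) = take j a" by simp
  then show ?thesis using True j k unfolding Fv_def by (auto simp: min_def)
next
  case False
  then have "j = length a + 1" using j by simp
  then show ?thesis unfolding Fv_def by auto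
qed

lemma edge_term:
  assumes p: "0 < p"
  shows "\<bar>real (min n (2 ^ k)) / (2 ^ k) powr (1/p) - real (min (n + 1) (2 ^ k)) / (2 ^ k) powr (1/p)\<bar> powr p
    = (if n < 2 ^ k then 1 / 2 ^ k else 0)"
proof (cases "n < 2 ^ k")
  case True
  then have "min n (2 ^ k) = n" "min (n + 1) (2 ^ k) = n + 1" by auto
  then have "\<bar>real (min n (2 ^ k)) / (2 ^ k) powr (1/p) - real (min (n + 1) (2 ^ k)) / (2 ^ k) powr (1/p)\<bar>
      = 1 / (2 ^ k) powr (1/p)" by (simp add: diff_divide_distrib[symmetric])
  also have "(1 / (2 ^ k) powr (1/p)) powr p = 1 / 2 ^ k"
    using p by (simp add: powr_divide powr_powr)
  finally show ?thesis using True by simp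
next
  case False
  then show ?thesis by (simp add: min_def)
qed

lemma card_window: "card {j \<in> {1..n}. n - j < (m::nat)} \<le> m"
proof -
  have "{j \<in> {1..n}. n - j < m} \<subseteq> {n + 1 - m..n}" by auto
  then have "card {j \<in> {1..n}. n - j < m} \<le> card {n + 1 - m..n}" by (intro card_mono) auto
  also have "\<dots> \<le> m" by simp
  finally show ?thesis .
qed

lemma emb_edge:
  assumes p: "1 < p"
  shows "lp_dist p (emb p K a) (emb p K (a @ [i])) \<le> real (K + 1) powr (1/p)"
proof -
  define b where "b = a @ [i]"
  define G where "G x = Fv p K a x - Fv p K b x" for x
  have Gs: "G x = 0" if "x \<notin> Supp K b" for x
  proof -
    have "x \<notin> Supp K a" using that Supp_mono[of K a i] unfolding b_def by blast
    then show ?thesis unfolding G_def using Fv_supp[of x K a p] Fv_supp[of x K b p] that by simp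
  qed
  have "(\<lambda>n. \<bar>G (dec n)\<bar> powr p) sums (\<Sum>x\<in>Supp K b. \<bar>G x\<bar> powr p)"
    by (rule fin_support[OF finite_Supp Gs])
  then have ps: "psum p (\<lambda>n. emb p K a n - emb p K b n) = (\<Sum>x\<in>Supp K b. \<bar>G x\<bar> powr p)"
    unfolding psum_def emb_def G_def by (simp add: sums_iff)
  have inj: "inj_on (\<lambda>j. take j b) {1..length b}"
  proof (rule inj_onI)
    fix j j' assume j: "j \<in> {1..length b}" and j': "j' \<in> {1..length b}" and e: "take j b = take j' b"
    have "length (take j b) = length (take j' b)" using e by simp
    then show "j = j'" using j j' by simp
  qed
  have "(\<Sum>x\<in>Supp K b. \<bar>G x\<bar> powr p) = (\<Sum>k\<in>{..K}. \<Sum>w\<in>(\<lambda>j. take j b) ` {1..length b}. \<bar>G (k, w)\<bar> powr p)"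
    unfolding Supp_def sum.cartesian_product by (simp add: case_prod_beta)
  also have "\<dots> = (\<Sum>k\<in>{..K}. \<Sum>j\<in>{1..length b}. \<bar>G (k, take j b)\<bar> powr p)"
    by (rule sum.cong[OF refl], subst sum.reindex[OF inj], simp add: o_def)
  also have "\<dots> = (\<Sum>k\<in>{..K}. \<Sum>j\<in>{1..length b}. (if length b - j < 2 ^ k then 1 / 2 ^ k else 0))"
  proof (intro sum.cong refl)
    fix k j assume k: "k \<in> {..K}" and j: "j \<in> {1..length b}"
    have "length b - j + 1 = (length b - j) + 1" by simp
    have "\<bar>G (k, take j b)\<bar> = \<bar>real (min (length b - j) (2 ^ k)) / (2 ^ k) powr (1/p) - real (min (length b - j + 1) (2 ^ k)) / (2 ^ k) powr (1/p)\<bar>"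
      unfolding G_def using Fv_a[of j a i k K p] Fv_b[of j b k K p] j k unfolding b_def by simp
    then show "\<bar>G (k, take j b)\<bar> powr p = (if length b - j < 2 ^ k then 1 / 2 ^ k else 0)"
      using edge_term[of p "length b - j" k] p by simp
  qed
  also have "\<dots> \<le> (\<Sum>k\<in>{..K}. (1::real))"
  proof (rule sum_mono)
    fix k assume "k \<in> {..K}"
    have "(\<Sum>j\<in>{1..length b}. (if length b - j < 2 ^ k then 1 / 2 ^ k else 0))
        = (\<Sum>j\<in>{j \<in> {1..length b}. length b - j < 2 ^ k}. (1 / 2 ^ k :: real))"
      by (rule sum.inter_filter[symmetric]) simp
    also have "\<dots> = real (card {j \<in> {1..length b}. length b - j < 2 ^ k}) * (1 / 2 ^ k :: real)"
      by simp
    also have "\<dots> \<le> real ((2::nat) ^ k) * (1 / 2 ^ k)"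
      using card_window[of "length b" "2 ^ k"] by (intro mult_right_mono) auto
    also have "\<dots> = 1" by simp
    finally show "(\<Sum>j\<in>{1..length b}. (if length b - j < 2 ^ k then 1 / 2 ^ k else 0)) \<le> (1::real)" .
  qed
  also have "\<dots> = real (K + 1)" by simp
  finally have "psum p (\<lambda>n. emb p K a n - emb p K b n) \<le> real (K + 1)" using ps by simp
  then have "psum p (\<lambda>n. emb p K a n - emb p K b n) powr (1/p) \<le> real (K + 1) powr (1/p)"
    using p psum_nonneg[OF lp_diff[OF _ emb_lp emb_lp]] by (intro powr_mono2) auto
  then show ?thesis unfolding lp_dist_psum b_def .
qed

lemma pow2_bracket: "1 \<le> (n::nat) \<Longrightarrow> \<exists>k. 2 ^ k \<le> n \<and> n < 2 ^ (k + 1)"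
proof (induction n rule: less_induct)
  case (less n)
  show ?case
  proof (cases "n = 1")
    case True
    then show ?thesis by (intro exI[of _ 0]) simp
  next
    case False
    then have "1 \<le> n div 2" "n div 2 < n" using less.prems by auto
    then obtain k where k: "2 ^ k \<le> n div 2" "n div 2 < 2 ^ (k + 1)" using less.IH by blast
    have "2 ^ (k + 1) \<le> n" using k(1) by simp
    moreover have "n < 2 ^ (k + 1 + 1)" using k(2) by simp
    ultimately show ?thesis by blast
  qed
qed

lemma emb_lower:
  assumes p: "1 < p" and c: "c = lcp a b"
    and k0: "2 ^ (k0 + 1) \<le> length a - c + 1" "length a - c + 1 < 2 ^ (k0 + 2)" and kK: "k0 \<le> K"
  shows "real (length a - c + 1) / 4 \<le> lp_dist p (emb p K a) (emb p K b)"
proof -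
  define M :: nat where "M = 2 ^ k0"
  have M1: "1 \<le> M" unfolding M_def by simp
  have cl: "c \<le> length a" unfolding c by (rule lcp_le)
  define J where "J = {c + 1 .. length a + 1 - M}"
  have sM: "2 * M \<le> length a - c + 1" using k0(1) unfolding M_def by simp
  have cardJ: "M \<le> card J" unfolding J_def using sM cl by simp
  have Jj: "1 \<le> j" "j \<le> length a" "M \<le> length a - j + 1" "c < j" if "j \<in> J" for j
    using that M1 sM cl unfolding J_def by auto
  define g where "g j = (k0, take j a)" for j
  have injg: "inj_on g J"
  proof (rule inj_onI)
    fix j j' assume j: "j \<in> J" and j': "j' \<in> J" and e: "g j = g j'"
    have "length (take j a) = length (take j' a)" using e unfolding g_def by simp
    then show "j = j'" using Jj(2)[OF j] Jj(2)[OF j'] by simp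
  qed
  define f where "f n = \<bar>emb p K a n - emb p K b n\<bar> powr p" for n
  define Mr where "Mr = real M"
  have Mr0: "0 < Mr" unfolding Mr_def using M1 by simp
  have trm: "f (enc (g j)) = Mr powr (p - 1)" if j: "j \<in> J" for j
  proof -
    have la: "length (take j a) = j" using Jj(2)[OF j] by simp
    have ne: "take j a \<noteq> []" using Jj(1,2)[OF j] by (cases a) auto
    have Fa: "Fv p K a (g j) = Mr / Mr powr (1/p)"
      unfolding Fv_def g_def using kK ne la Jj(3)[OF j] by (simp add: M_def Mr_def min_def)
    have nb: "take j b \<noteq> take j a"
    proof
      assume e: "take j b = take j a"
      have "j \<le> length b"
      proof (rule ccontr)
        assume "\<not> j \<le> length b"
        then have "length (take j b) < j" by simp
        then show False using e la by simp
      qed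
      then have "j \<le> lcp a b" using lcp_take[of j a b] Jj(2)[OF j] e by simp
      then show False using Jj(4)[OF j] c by simp
    qed
    have Fb: "Fv p K b (g j) = 0" unfolding Fv_def g_def using la nb by auto
    have "f (enc (g j)) = (Mr / Mr powr (1/p)) powr p" unfolding f_def emb_def using Fa Fb Mr0 by simp
    also have "\<dots> = Mr powr p / Mr" using Mr0 p by (simp add: powr_divide powr_powr)
    also have "\<dots> = Mr powr (p - 1)" using Mr0 by (simp add: powr_diff)
    finally show ?thesis .
  qed
  have lpab: "(\<lambda>n. emb p K a n - emb p K b n) \<in> lp_space p" using p by (intro lp_diff emb_lp) auto
  have "(\<Sum>n\<in>enc ` g ` J. f n) \<le> suminf f"
      proof (rule sum_le_suminf)
    show "summable f" using lpab unfolding lp_space_def f_def by simp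
    show "finite (enc ` g ` J)" unfolding J_def by simp
    show "0 \<le> f n" for n unfolding f_def by simp
  qed
  also have "suminf f = psum p (\<lambda>n. emb p K a n - emb p K b n)" unfolding f_def psum_def by simp
  also have "(\<Sum>n\<in>enc ` g ` J. f n) = (\<Sum>j\<in>J. f (enc (g j)))"
    by (subst sum.reindex[OF inj_enc], subst sum.reindex[OF injg], simp add: o_def)
  also have "\<dots> = real (card J) * Mr powr (p - 1)" using trm by simp
  finally have A: "real (card J) * Mr powr (p - 1) \<le> psum p (\<lambda>n. emb p K a n - emb p K b n)" .
  have "Mr powr p = Mr * Mr powr (p - 1)" using Mr0 by (simp add: powr_diff)
  also have "\<dots> \<le> real (card J) * Mr powr (p - 1)" using cardJ unfolding Mr_def by (intro mult_right_mono) auto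
  finally have B: "Mr powr p \<le> psum p (\<lambda>n. emb p K a n - emb p K b n)" using A by simp
  then have "(Mr powr p) powr (1/p) \<le> psum p (\<lambda>n. emb p K a n - emb p K b n) powr (1/p)"
    using p Mr0 by (intro powr_mono2) auto
  then have C: "Mr \<le> lp_dist p (emb p K a) (emb p K b)" using Mr0 p by (simp add: powr_powr lp_dist_psum)
  have "length a - c + 1 < 4 * M" using k0(2) unfolding M_def by (simp add: power_add)
  then have "real (length a - c + 1) < real (4 * M)" by (simp only: of_nat_less_iff)
  then have "real (length a - c + 1) < 4 * Mr" unfolding Mr_def by simp
  then show ?thesis using C by simp
qed



lemma emb_lower_gen:
  assumes p: "1 < p" and ab: "a \<noteq> b" and la: "length a \<le> h" and hK: "h < 2 ^ (K + 1)"
    and st: "length b - lcp a b \<le> length a - lcp a b"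
  shows "tree_dist a b \<le> 8 * lp_dist p (emb p K a) (emb p K b)"
proof -
  define c where "c = lcp a b"
  have cl: "c \<le> length a" "c \<le> length b" unfolding c_def by (rule lcp_le)+
  define s where "s = length a - c"
  have s1: "1 \<le> s"
  proof (rule ccontr)
    assume "\<not> 1 \<le> s"
    then have "length a = c" "length b = c" using st cl unfolding s_def c_def by auto
    then have "a = b" using take_lcp[of a b] unfolding c_def by simp
    then show False using ab by simp
  qed
  obtain k0 where k0: "2 ^ k0 \<le> (s + 1) div 2" "(s + 1) div 2 < 2 ^ (k0 + 1)"
  proof -
    have "1 \<le> (s + 1) div 2" using div_le_mono[of 2 "s + 1" 2] s1 by simp
    then show ?thesis using pow2_bracket[of "(s + 1) div 2"] that by blast
  qed
  have k0a: "2 ^ (k0 + 1) \<le> length a - c + 1" using k0(1) unfolding s_def by simp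
  have k0b: "length a - c + 1 < 2 ^ (k0 + 2)" using k0(2) unfolding s_def by simp
  have "(2::nat) ^ k0 < 2 ^ (K + 1)"
  proof -
    have "(s + 1) div 2 \<le> s" by simp
    also have "s \<le> h" unfolding s_def using la by simp
    finally show ?thesis using k0(1) hK by simp
  qed
  then have "k0 < K + 1" using power_less_imp_less_exp[of "2::nat" k0 "K + 1"] by simp
  then have kK: "k0 \<le> K" by simp
  have L: "real (length a - c + 1) / 4 \<le> lp_dist p (emb p K a) (emb p K b)"
    by (rule emb_lower[OF p c_def k0a k0b kK])
  have "tree_dist a b = real (s + (length b - c))" unfolding tree_dist_def s_def c_def[symmetric]
    using cl by simp
  also have "\<dots> \<le> 2 * real (length a - c + 1)" using st cl unfolding s_def c_def by simp
  finally show ?thesis using L by simp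
qed

lemma emb_lower_all:
  assumes p: "1 < p" and ab: "a \<noteq> b" and la: "length a \<le> h" and lb: "length b \<le> h" and hK: "h < 2 ^ (K + 1)"
  shows "tree_dist a b \<le> 8 * lp_dist p (emb p K a) (emb p K b)"
proof (cases "length b - lcp a b \<le> length a - lcp a b")
  case True
  then show ?thesis using emb_lower_gen[OF p ab la hK] by simp
next
  case False
  then have "length a - lcp b a \<le> length b - lcp b a" by (simp add: lcp_sym)
  then have "tree_dist b a \<le> 8 * lp_dist p (emb p K b) (emb p K a)"
    using emb_lower_gen[OF p _ lb hK] ab by auto
  moreover have "tree_dist b a = tree_dist a b" unfolding tree_dist_def by (simp add: lcp_sym add.commute)
  ultimately show ?thesis by (simp add: lp_dist_sym)
qed

lemma upper_bound:
  assumes p: "1 < p" and h: "2 \<le> h"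
  shows "distortion (tree_vertices h) tree_dist (lp_space p) (lp_dist p)
    \<le> ereal (8 * (2 / ln 2) powr (1/p) * ln (real h) powr (1/p))"
proof -
  have p1: "1 \<le> p" using p by simp
  obtain K where K: "2 ^ K \<le> h" "h < 2 ^ (K + 1)" using pow2_bracket[of h] h by auto
  define f where "f = emb p K"
  define T where "T = tree_vertices h"
  define L where "L = real (K + 1) powr (1/p)"
  have fl: "f a \<in> lp_space p" for a unfolding f_def by (rule emb_lp)
  have up: "lp_dist p (f a) (f b) \<le> L * tree_dist a b" if "a \<in> T" "b \<in> T" for a b
    unfolding f_def L_def
  proof (rule path_lip[OF _ p1 _ that[unfolded T_def tree_vertices_def, simplified]])
    show "emb p K a \<in> lp_space p" for a by (rule emb_lp)
    show "lp_dist p (emb p K a) (emb p K (a @ [i])) \<le> real (K + 1) powr (1 / p)" for a i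
      by (rule emb_edge[OF p])
  qed
  have lo: "tree_dist a b \<le> 8 * lp_dist p (f a) (f b)" if "a \<in> T" "b \<in> T" "a \<noteq> b" for a b
    unfolding f_def using emb_lower_all[OF p that(3) _ _ K(2)] that unfolding T_def tree_vertices_def by auto
  have dpos: "0 < lp_dist p (f a) (f b)" if "a \<in> T" "b \<in> T" "a \<noteq> b" for a b
  proof -
    have "1 \<le> tree_dist a b" using tree_dist_pos that(3) .
    then show ?thesis using lo[OF that] by simp
  qed
  have inj: "inj_on f T"
  proof (rule inj_onI)
    fix a b assume "a \<in> T" "b \<in> T" "f a = f b"
    then show "a = b" using dpos[of a b] lp_dist_self[of p "f a"] by (metis less_irrefl)
  qed
  have L0: "0 \<le> L" unfolding L_def by simp
  have Lip_le: "Lip T tree_dist (lp_dist p) f \<le> ereal L"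
    unfolding Lip_def
  proof (rule SUP_least)
    fix uv assume "uv \<in> {(u, v). u \<in> T \<and> v \<in> T \<and> u \<noteq> v}"
    then obtain u v where uv: "uv = (u, v)" "u \<in> T" "v \<in> T" "u \<noteq> v" by auto
    have "1 \<le> tree_dist u v" using tree_dist_pos uv(4) .
    then have "lp_dist p (f u) (f v) / tree_dist u v \<le> L" using up[OF uv(2,3)]
      by (simp add: divide_le_eq mult.commute)
    then show "ereal (lp_dist p (f (fst uv)) (f (snd uv)) / tree_dist (fst uv) (snd uv)) \<le> ereal L"
      using uv by simp
  qed
  have Li_le: "Lip_inv T tree_dist (lp_dist p) f \<le> ereal 8"
    unfolding Lip_inv_def
  proof (rule SUP_least)
    fix uv assume "uv \<in> {(u, v). u \<in> T \<and> v \<in> T \<and> u \<noteq> v}"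
    then obtain u v where uv: "uv = (u, v)" "u \<in> T" "v \<in> T" "u \<noteq> v" by auto
    have "tree_dist u v / lp_dist p (f u) (f v) \<le> 8" using lo[OF uv(2-4)] dpos[OF uv(2-4)]
      by (simp add: divide_le_eq)
    then show "ereal (tree_dist (fst uv) (snd uv) / lp_dist p (f (fst uv)) (f (snd uv))) \<le> ereal 8"
      using uv by simp
  qed
  have pair: "([], [0]) \<in> {(u, v). u \<in> T \<and> v \<in> T \<and> u \<noteq> v}"
    using h unfolding T_def tree_vertices_def by auto
  have Li0: "0 \<le> Lip_inv T tree_dist (lp_dist p) f"
    unfolding Lip_inv_def
    by (rule SUP_upper2[OF pair]) (simp add: lp_dist_nonneg tree_dist_def)
  have "distortion T tree_dist (lp_space p) (lp_dist p)
      \<le> Lip T tree_dist (lp_dist p) f * Lip_inv T tree_dist (lp_dist p) f"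
    unfolding distortion_def using inj fl by (intro INF_lower) auto
  also have "\<dots> \<le> ereal L * ereal 8"
    by (rule ereal_mult_mono[OF _ Li0 Lip_le Li_le]) (simp add: L0)
  also have "\<dots> = ereal (8 * L)" by simp
  also have "8 * L \<le> 8 * (2 / ln 2) powr (1/p) * ln (real h) powr (1/p)"
  proof -
    have K1: "1 \<le> K"
    proof (rule ccontr)
      assume "\<not> 1 \<le> K" then have "K = 0" by simp
      then show False using K(2) h by simp
    qed
    have "real K = log 2 (2 ^ K)" by simp
    also have "\<dots> \<le> log 2 (real h)" using K(1) h by (subst log_le_cancel_iff) (auto simp del: log_pow_cancel)
    finally have Kl: "real K \<le> log 2 (real h)" .
    have "real (K + 1) \<le> 2 / ln 2 * ln (real h)"
    proof -
      have "real (K + 1) \<le> 2 * real K" using K1 by simp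
      also have "\<dots> \<le> 2 * log 2 (real h)" using Kl by simp
      also have "\<dots> = 2 / ln 2 * ln (real h)" by (simp add: log_def)
      finally show ?thesis .
    qed
    then have "L \<le> (2 / ln 2 * ln (real h)) powr (1/p)" unfolding L_def using p by (intro powr_mono2) auto
    also have "\<dots> = (2 / ln 2) powr (1/p) * ln (real h) powr (1/p)"
      using h by (subst powr_mult) auto
    finally show ?thesis by simp
  qed
  finally show ?thesis unfolding T_def by simp
qed


theorem mainTheorem5:
  fixes p :: real
  assumes "1 < p"
  shows "\<exists>c1 c2. 0 < c1 \<and> c1 \<le> c2 \<and>
    (\<forall>h::nat. 2 \<le> h \<longrightarrow>
       ereal (c1 * ln (real h) powr (1 / p)) \<le> distortion (tree_vertices h) tree_dist (lp_space p) (lp_dist p) \<and>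
       distortion (tree_vertices h) tree_dist (lp_space p) (lp_dist p) \<le> ereal (c2 * ln (real h) powr (1 / p)))"
proof -
  define c1 where "c1 = (kappa p / (2 * ln 2)) powr (1/p)"
  define c2 where "c2 = max c1 (8 * (2 / ln 2) powr (1/p))"
  have c1: "0 < c1" unfolding c1_def using kappa_pos[OF assms] by simp
  have c12: "c1 \<le> c2" unfolding c2_def by simp
  have "ereal (c1 * ln (real h) powr (1 / p)) \<le> distortion (tree_vertices h) tree_dist (lp_space p) (lp_dist p)
     \<and> distortion (tree_vertices h) tree_dist (lp_space p) (lp_dist p) \<le> ereal (c2 * ln (real h) powr (1 / p))"
    if h: "2 \<le> h" for h :: nat
  proof
    show "ereal (c1 * ln (real h) powr (1 / p)) \<le> distortion (tree_vertices h) tree_dist (lp_space p) (lp_dist p)"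
      using lower_bound[OF assms h] unfolding c1_def by simp
    have "distortion (tree_vertices h) tree_dist (lp_space p) (lp_dist p)
        \<le> ereal (8 * (2 / ln 2) powr (1/p) * ln (real h) powr (1/p))"
      by (rule upper_bound[OF assms h])
    also have "\<dots> \<le> ereal (c2 * ln (real h) powr (1 / p))"
      unfolding c2_def by (simp add: mult_right_mono)
    finally show "distortion (tree_vertices h) tree_dist (lp_space p) (lp_dist p) \<le> ereal (c2 * ln (real h) powr (1 / p))" .
  qed
  then show ?thesis using c1 c12 by blast
qed

end
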